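(* Let $\ell>0$, $\varepsilon>0$ and $v_->0$, $u_\pm>0$ be given, and set $v_*:=v_-$. Let $P\in C^2(\mathbb{R}^+)$ and $\nu\in C^1(\mathbb{R}^+)$ satisfy, for all $u>0$, $$P(0)=0,\quad P(+\infty)=+\infty,\quad P'(u)>0,\quad P''(u)>0,\quad \nu(u)>0.$$ Set $f(u):=u\int_0^u \frac{P(z)}{z^2}\,dz$ and assume $$v_*^2\,(u_+-u_-)=u_-\,u_+\,\big(P(u_+)-P(u_-)\big)\qquad\text{and}\qquad \Big(\frac{v_*^3}{2u_+^2}+v_*f'(u_+)\Big)-\Big(\frac{v_*^3}{2u_-^2}+v_*f'(u_-)\Big)\le 0.$$ Consider the initial-boundary value problem $$u_t+v_x=0,\qquad v_t+\Big\{\frac{v^2}{u}+P(u)-\varepsilon\,\nu(u)\Big(\frac{v}{u}\Big)_x\Big\}_x=0,\qquad x\in(-\ell,\ell),\ t\ge0,$$ with $u(\pm\ell,t)=u_\pm$, $v(-\ell,t)=v_-$ for $t\ge0$ and $u(x,0)=u_0(x)$, $v(x,0)=v_0(x)$. Then there exists a unique stationary solution $(\bar u(x),\bar v(x))$ of this problem, i.e. a unique time-independent solution of the boundary value problem $$v_x=0,\qquad \Big\{\frac{v^2}{u}+P(u)-\varepsilon\,\nu(u)\Big(\frac{v}{u}\Big)_x\Big\}_x=0\ \text{ on }(-\ell,\ell),\qquad u(\pm\ell)=u_\pm,\quad v(-\ell)=v_-.$$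
   Context: Here $u$ is the fluid density and $v$ the momentum (for a compressible isentropic fluid with density-dependent viscosity $\nu$). Since $v_x=0$, the second component of a stationary solution is the constant $v_*=v_-$; the second displayed condition is the entropy jump condition $[\![\frac{v^3}{2u^2}+vf'(u)]\!]\le0$ with $v_+=v_-=v_*$, where $[\![g]\!]$ denotes the value at $(u_+,v_* )$ minus the value at $(u_-,v_* )$. *)

theory Defs
  imports "HOL-Analysis.Analysis"
begin

definition f_of :: "(real \<Rightarrow> real) \<Rightarrow> real \<Rightarrow> real" where
  "f_of P u = u * integral {0..u} (\<lambda>z. P z / z\<^sup>2)"

definition stationary_solution ::
  "(real \<Rightarrow> real) \<Rightarrow> (real \<Rightarrow> real) \<Rightarrow> real \<Rightarrow> real \<Rightarrow> real \<Rightarrow> real \<Rightarrow> real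
   \<Rightarrow> (real \<Rightarrow> real) \<Rightarrow> (real \<Rightarrow> real) \<Rightarrow> bool" where
  "stationary_solution P \<nu> \<epsilon> l um up vm u v \<longleftrightarrow>
     continuous_on {-l..l} u \<and> continuous_on {-l..l} v \<and>
     (\<forall>x\<in>{-l..l}. u x > 0) \<and>
     (\<forall>x\<in>{-l<..<l}. u differentiable (at x)) \<and>
     (\<forall>x\<in>{-l<..<l}. (v has_real_derivative 0) (at x)) \<and>
     (\<forall>x\<in>{-l<..<l}.
        ((\<lambda>y. (v y)\<^sup>2 / u y + P (u y) - \<epsilon> * \<nu> (u y) * deriv (\<lambda>z. v z / u z) y)
           has_real_derivative 0) (at x)) \<and>
     u (-l) = um \<and> u l = up \<and> v (-l) = vm"

end

theory Submission
  imports Defs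
begin


lemma C1_lip:
  fixes f f' :: "real \<Rightarrow> real"
  assumes d: "\<And>s. s \<in> {m..M} \<Longrightarrow> (f has_real_derivative f' s) (at s)"
    and c: "continuous_on {m..M} f'"
  shows "\<exists>L. \<forall>s\<in>{m..M}. \<forall>t\<in>{m..M}. \<bar>f s - f t\<bar> \<le> L * \<bar>s - t\<bar>"
proof -
  have "compact (f' ` {m..M})" using c compact_continuous_image compact_Icc by blast
  then obtain B where B: "\<And>s. s \<in> {m..M} \<Longrightarrow> \<bar>f' s\<bar> \<le> B"
    by (metis compact_imp_bounded bounded_real image_eqI)
  have key: "\<bar>f t - f s\<bar> \<le> B * \<bar>t - s\<bar>" if "s \<in> {m..M}" "t \<in> {m..M}" "s < t" for s t
  proof -
    have "\<And>x. s \<le> x \<Longrightarrow> x \<le> t \<Longrightarrow> (f has_real_derivative f' x) (at x)"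
      using that d by auto
    from MVT2[OF \<open>s < t\<close> this] obtain z where z: "s < z" "z < t" "f t - f s = (t - s) * f' z" by blast
    have "\<bar>f' z\<bar> \<le> B" using B z that by auto
    then show ?thesis using z \<open>s<t\<close> by (simp add: abs_mult mult_right_mono mult.commute)
  qed
  show ?thesis
  proof (intro exI ballI)
    fix s t assume st: "s \<in> {m..M}" "t \<in> {m..M}"
    consider "s < t" | "s = t" | "t < s" by linarith
    then show "\<bar>f s - f t\<bar> \<le> B * \<bar>s - t\<bar>"
    proof cases
      case 1 then show ?thesis using key[OF st] by (simp add: abs_minus_commute)
    next
      case 2 then show ?thesis by simp
    next
      case 3 then show ?thesis using key[of t s] st by simp
    qed
  qed
qed



lemma compare_false:
  fixes u1 u2 F1 F2 :: "real \<Rightarrow> real"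
  assumes l: "l > 0"
    and c1: "continuous_on {-l..l} u1" and c2: "continuous_on {-l..l} u2"
    and p1: "\<And>x. x \<in> {-l..l} \<Longrightarrow> u1 x > 0" and p2: "\<And>x. x \<in> {-l..l} \<Longrightarrow> u2 x > 0"
    and cF1: "continuous_on {0<..} F1" and cF2: "continuous_on {0<..} F2"
    and lt: "\<And>s. s > 0 \<Longrightarrow> F2 s < F1 s"
    and d1: "\<And>x. x \<in> {-l<..<l} \<Longrightarrow> (u1 has_real_derivative F1 (u1 x)) (at x)"
    and d2: "\<And>x. x \<in> {-l<..<l} \<Longrightarrow> (u2 has_real_derivative F2 (u2 x)) (at x)"
    and e1: "u1 (-l) = u2 (-l)" and e2: "u1 l = u2 l"
  shows False
proof -
  define d where "d x = u1 x - u2 x" for x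
  define e where "e x = F1 (u1 x) - F2 (u2 x)" for x
  have dd: "(d has_real_derivative e x) (at x)" if "x \<in> {-l<..<l}" for x
    unfolding d_def[abs_def] e_def using d1[OF that] d2[OF that] by (intro derivative_intros)
  have ddf: "d differentiable (at x)" if "x \<in> {-l<..<l}" for x
    using dd[OF that] real_differentiable_def by blast
  have cd: "continuous_on {-l..l} d" unfolding d_def[abs_def] using c1 c2 by (intro continuous_intros)
  have im1: "u1 ` {-l..l} \<subseteq> {0<..}" using p1 by auto
  have im2: "u2 ` {-l..l} \<subseteq> {0<..}" using p2 by auto
  have ce: "continuous_on {-l..l} e" unfolding e_def[abs_def]
    by (intro continuous_intros continuous_on_compose2[OF cF1 c1 im1] continuous_on_compose2[OF cF2 c2 im2])
  have el: "e (-l) > 0" unfolding e_def using e1 lt p2[of "-l"] l by auto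
  have er: "e l > 0" unfolding e_def using e2 lt p2[of "l"] l by auto
  obtain \<delta>1 where \<delta>1: "\<delta>1 > 0" "\<And>x. x \<in> {-l..l} \<Longrightarrow> dist x (-l) < \<delta>1 \<Longrightarrow> e x > 0"
  proof -
    have "-l \<in> {-l..l}" using l by auto
    from ce[unfolded continuous_on_iff, rule_format, OF this, of "e (-l)"] el
    obtain \<delta> where "\<delta> > 0" "\<forall>x\<in>{-l..l}. dist x (-l) < \<delta> \<longrightarrow> dist (e x) (e (-l)) < e (-l)" by auto
    then show ?thesis apply - apply (rule that[of \<delta>]) apply simp by (auto simp: dist_real_def abs_diff_less_iff)
  qed
  obtain \<delta>2 where \<delta>2: "\<delta>2 > 0" "\<And>x. x \<in> {-l..l} \<Longrightarrow> dist x l < \<delta>2 \<Longrightarrow> e x > 0"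
  proof -
    have "l \<in> {-l..l}" using l by auto
    from ce[unfolded continuous_on_iff, rule_format, OF this, of "e l"] er
    obtain \<delta> where "\<delta> > 0" "\<forall>x\<in>{-l..l}. dist x l < \<delta> \<longrightarrow> dist (e x) (e l) < e l" by auto
    then show ?thesis apply - apply (rule that[of \<delta>]) apply simp by (auto simp: dist_real_def abs_diff_less_iff)
  qed
  define x1 where "x1 = -l + min \<delta>1 l / 2"
  define x2 where "x2 = l - min \<delta>2 l / 2"
  have x1: "-l < x1" "x1 < x2" "x2 < l" using l \<delta>1 \<delta>2 unfolding x1_def x2_def by (auto simp: min_def)
  have dx1: "d x1 > 0"
  proof -
    have "\<exists>ll z. -l < z \<and> z < x1 \<and> DERIV d z :> ll \<and> d x1 - d (-l) = (x1 - -l) * ll"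
      apply (rule MVT)
      using x1 apply simp
      apply (rule continuous_on_subset[OF cd]) using x1 apply simp
      using ddf x1 by auto
    then obtain ll z where z: "-l < z" "z < x1" "DERIV d z :> ll" "d x1 - d (-l) = (x1 - -l) * ll" by blast
    have "ll = e z" using DERIV_unique[OF z(3) dd[of z]] z x1 by auto
    moreover have "e z > 0" apply (rule \<delta>1(2)) using z x1 unfolding x1_def dist_real_def by auto
    moreover have "d (-l) = 0" unfolding d_def using e1 by simp
    ultimately show ?thesis using z x1 by simp
  qed
  have dx2: "d x2 < 0"
  proof -
    have "\<exists>ll z. x2 < z \<and> z < l \<and> DERIV d z :> ll \<and> d l - d x2 = (l - x2) * ll"
      apply (rule MVT)
      using x1 apply simp
      apply (rule continuous_on_subset[OF cd]) using x1 apply simp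
      using ddf x1 by auto
    then obtain ll z where z: "x2 < z" "z < l" "DERIV d z :> ll" "d l - d x2 = (l - x2) * ll" by blast
    have "ll = e z" using DERIV_unique[OF z(3) dd[of z]] z x1 by auto
    moreover have "e z > 0" apply (rule \<delta>2(2)) using z x1 unfolding x2_def dist_real_def by auto
    moreover have "d l = 0" unfolding d_def using e2 by simp
    moreover have "(l - x2) * e z > 0" using z \<open>e z > 0\<close> by simp
    ultimately show ?thesis using z(4) by (smt (verit))
  qed
  define Z where "Z = {x1..x2} \<inter> d -` {..0}"
  have cZ: "closed Z" unfolding Z_def
    apply (rule continuous_closed_preimage)
    apply (rule continuous_on_subset[OF cd]) using x1 by auto
  have Zne: "x2 \<in> Z" unfolding Z_def using dx2 x1 by auto
  have bZ: "bdd_below Z" unfolding Z_def by (rule bdd_belowI[of _ x1]) auto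
  define xs where "xs = Inf Z"
  have xsZ: "xs \<in> Z" unfolding xs_def using closed_contains_Inf[OF _ bZ cZ] Zne by auto
  have low: "xs \<le> y" if "y \<in> Z" for y unfolding xs_def using cInf_lower[OF that bZ] .
  have xs1: "x1 \<le> xs" "xs \<le> x2" "d xs \<le> 0" using xsZ unfolding Z_def by auto
  have "\<exists>z. x1 \<le> z \<and> z \<le> xs \<and> d z = 0"
    apply (rule IVT2') using xs1 dx1 apply auto[3]
    apply (rule continuous_on_subset[OF cd]) using x1 xs1 by auto
  then obtain z where z: "x1 \<le> z" "z \<le> xs" "d z = 0" by blast
  have "z \<in> Z" unfolding Z_def using z xs1 by auto
  then have zxs: "z = xs" using low z by force
  have xsin: "xs \<in> {-l<..<l}" using xs1 x1 by auto
  have "x1 < xs" using zxs z dx1 by (metis order_le_less less_irrefl)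
  have "e xs > 0" unfolding e_def using z zxs d_def lt p1[of xs] xsin by auto
  from DERIV_pos_inc_left[OF dd[OF xsin] this] obtain \<delta>3 where
    \<delta>3: "\<delta>3 > 0" "\<And>h. h > 0 \<Longrightarrow> h < \<delta>3 \<Longrightarrow> d (xs - h) < d xs" by blast
  define h where "h = min \<delta>3 (xs - x1) / 2"
  have h: "h > 0" "h < \<delta>3" "h < xs - x1" unfolding h_def using \<delta>3 \<open>x1 < xs\<close> by (auto simp: min_def)
  have "d (xs - h) < 0" using \<delta>3(2)[OF h(1,2)] z zxs by simp
  then have "xs - h \<in> Z" unfolding Z_def using h xs1 by auto
  then show False using low h by force
qed



lemma uniq_lip:
  fixes u1 u2 F :: "real \<Rightarrow> real"
  assumes l: "l > 0"
    and c1: "continuous_on {-l..l} u1" and c2: "continuous_on {-l..l} u2"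
    and r1: "\<And>x. x \<in> {-l..l} \<Longrightarrow> u1 x \<in> {m..M}" and r2: "\<And>x. x \<in> {-l..l} \<Longrightarrow> u2 x \<in> {m..M}"
    and lip: "\<And>s t. s \<in> {m..M} \<Longrightarrow> t \<in> {m..M} \<Longrightarrow> \<bar>F s - F t\<bar> \<le> L * \<bar>s - t\<bar>"
    and d1: "\<And>x. x \<in> {-l<..<l} \<Longrightarrow> (u1 has_real_derivative F (u1 x)) (at x)"
    and d2: "\<And>x. x \<in> {-l<..<l} \<Longrightarrow> (u2 has_real_derivative F (u2 x)) (at x)"
    and e1: "u1 (-l) = u2 (-l)"
  shows "\<forall>x\<in>{-l..l}. u1 x = u2 x"
proof
  fix x assume x: "x \<in> {-l..l}"
  define z where "z y = (u1 y - u2 y)^2 * exp (-2 * L * y)" for y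
  define z' where "z' y = 2 * (u1 y - u2 y) * (F (u1 y) - F (u2 y)) * exp (-2 * L * y)
      + (u1 y - u2 y)^2 * (exp (-2 * L * y) * (-2 * L))" for y
  have dz: "(z has_real_derivative z' y) (at y)" if "y \<in> {-l<..<l}" for y
    unfolding z_def[abs_def] z'_def
    using d1[OF that] d2[OF that]
    by (auto intro!: derivative_eq_intros)
  have z'le: "z' y \<le> 0" if "y \<in> {-l<..<l}" for y
  proof -
    have "(u1 y - u2 y) * (F (u1 y) - F (u2 y)) \<le> \<bar>u1 y - u2 y\<bar> * \<bar>F (u1 y) - F (u2 y)\<bar>"
      by (metis abs_ge_self abs_mult)
    also have "\<dots> \<le> \<bar>u1 y - u2 y\<bar> * (L * \<bar>u1 y - u2 y\<bar>)"
      using lip[OF r1 r2, of y y] that by (intro mult_left_mono) auto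
    also have "\<dots> = L * (u1 y - u2 y)^2" by (simp add: power2_eq_square abs_mult_self algebra_simps)
    finally have "2 * ((u1 y - u2 y) * (F (u1 y) - F (u2 y))) - 2 * (L * (u1 y - u2 y)^2) \<le> 0" by linarith
    then have "(2 * ((u1 y - u2 y) * (F (u1 y) - F (u2 y))) - 2 * (L * (u1 y - u2 y)^2)) * exp (-2 * L * y) \<le> 0"
      by (simp add: mult_nonpos_nonneg)
    then show ?thesis unfolding z'_def by (simp add: algebra_simps)
  qed
  have cz: "continuous_on {-l..l} z" unfolding z_def[abs_def] using c1 c2 by (intro continuous_intros)
  have "z x \<le> 0"
  proof (cases "x = -l")
    case True then show ?thesis unfolding z_def using e1 by simp
  next
    case False
    then have lx: "-l < x" using x by auto
    have "\<exists>ll w. -l < w \<and> w < x \<and> DERIV z w :> ll \<and> z x - z (-l) = (x - -l) * ll"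
      apply (rule MVT[OF lx])
      apply (rule continuous_on_subset[OF cz]) using x apply simp
      using dz x real_differentiable_def by fastforce
    then obtain ll w where w: "-l < w" "w < x" "DERIV z w :> ll" "z x - z (-l) = (x - -l) * ll" by blast
    have "ll = z' w" using DERIV_unique[OF w(3) dz[of w]] w x by auto
    then have "ll \<le> 0" using z'le[of w] w x by auto
    moreover have "z (-l) = 0" unfolding z_def using e1 by simp
    ultimately show ?thesis using w lx by (simp add: mult_nonneg_nonpos)
  qed
  then have "(u1 x - u2 x)^2 \<le> 0" unfolding z_def
    by (simp add: mult_le_0_iff)
  then show "u1 x = u2 x" by simp
qed



lemma inv_quad:
  fixes k :: "real \<Rightarrow> real"
  assumes ab: "a < b" and l: "l > 0" and ck: "continuous_on {a..b} k"
    and kp: "\<And>s. s \<in> {a..b} \<Longrightarrow> k s > 0" and tot: "integral {a..b} k = 2 * l"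
  shows "\<exists>w. continuous_on {-l..l} w \<and> w (-l) = a \<and> w l = b \<and> (\<forall>x\<in>{-l..l}. w x \<in> {a..b}) \<and>
     (\<forall>x\<in>{-l<..<l}. (w has_real_derivative inverse (k (w x))) (at x))"
proof -
  define X where "X s = integral {a..s} k" for s
  have dX: "(X has_real_derivative k s) (at s within {a..b})" if "s \<in> {a..b}" for s
    unfolding X_def[abs_def] using integral_has_real_derivative[OF ck that] .
  have cX: "continuous_on {a..b} X"
    using dX DERIV_continuous continuous_on_eq_continuous_within by blast
  have dXo: "(X has_real_derivative k s) (at s)" if "s \<in> {a<..<b}" for s
  proof -
    have "(X has_real_derivative k s) (at s within {a<..<b})"
      using dX[of s] that by (auto intro: DERIV_subset)
    then show ?thesis using that at_within_open[of s "{a<..<b}"] by auto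
  qed
  have Xa: "X a = 0" unfolding X_def by simp
  have Xb: "X b = 2 * l" unfolding X_def using tot .
  have smono: "X s < X t" if "s \<in> {a..b}" "t \<in> {a..b}" "s < t" for s t
    apply (rule DERIV_pos_imp_increasing_open[OF \<open>s < t\<close>])
    subgoal for x apply (rule exI[of _ "k x"]) using that dXo[of x] kp[of x] by auto
    apply (rule continuous_on_subset[OF cX]) using that by auto
  have mono: "X s \<le> X t" if "s \<in> {a..b}" "t \<in> {a..b}" "s \<le> t" for s t
    using smono[OF that(1,2)] that(3) by (cases "s = t") auto
  have inj: "inj_on X {a..b}"
    by (metis inj_onI linorder_neqE_linordered_idom order_less_irrefl smono)
  have img: "X ` {a..b} = {0..2*l}"
  proof
    show "X ` {a..b} \<subseteq> {0..2*l}"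
    proof
      fix y assume "y \<in> X ` {a..b}"
      then obtain s where s: "s \<in> {a..b}" "y = X s" by blast
      have "X a \<le> X s" "X s \<le> X b" using mono[of a s] mono[of s b] s ab by auto
      then show "y \<in> {0..2*l}" using s Xa Xb by auto
    qed
    show "{0..2*l} \<subseteq> X ` {a..b}"
    proof
      fix y assume y: "y \<in> {0..2*l}"
      then obtain s where "a \<le> s" "s \<le> b" "X s = y" using IVT'[of X a y b] Xa Xb ab cX by auto
      then show "y \<in> X ` {a..b}" by auto
    qed
  qed
  define Y where "Y = inv_into {a..b} X"
  have YX: "Y (X s) = s" if "s \<in> {a..b}" for s unfolding Y_def using inv_into_f_f[OF inj that] .
  have XY: "X (Y y) = y" if "y \<in> {0..2*l}" for y unfolding Y_def using f_inv_into_f[of y X "{a..b}"] that img by auto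
  have Yin: "Y y \<in> {a..b}" if "y \<in> {0..2*l}" for y unfolding Y_def using inv_into_into[of y X "{a..b}"] that img by auto
  have cY: "continuous_on {0..2*l} Y"
    using continuous_on_inv[OF cX compact_Icc, of Y] YX img by auto
  define w where "w x = Y (x + l)" for x
  have sub: "(\<lambda>x. x + l) ` {-l..l} \<subseteq> {0..2*l}"
  proof (rule image_subsetI)
    fix x :: real assume "x \<in> {-l..l}" then show "x + l \<in> {0..2*l}" by simp
  qed
  have cw: "continuous_on {-l..l} w" unfolding w_def[abs_def]
    by (rule continuous_on_compose2[OF cY _ sub]) (intro continuous_intros)
  have "Y (X a) = a" by (rule YX) (use ab in simp)
  then have w1: "w (-l) = a" using Xa by (simp add: w_def)
  have bb: "b \<in> {a..b}" using ab by simp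
  have "Y (X b) = b" using YX[OF bb] .
  moreover have "w l = Y (X b)" unfolding w_def Xb by simp
  ultimately have w2: "w l = b" by simp
  have win: "\<forall>x\<in>{-l..l}. w x \<in> {a..b}"
  proof
    fix x assume "x \<in> {-l..l}"
    then have "x + l \<in> {0..2*l}" by simp
    then show "w x \<in> {a..b}" unfolding w_def by (rule Yin)
  qed
  have dw: "(w has_real_derivative inverse (k (w x))) (at x)" if x: "x \<in> {-l<..<l}" for x
  proof -
    define y where "y = x + l"
    have y: "0 < y" "y < 2 * l" using x unfolding y_def by auto
    have Yy: "Y y \<in> {a..b}" using Yin y by auto
    have "Y y \<noteq> a" using XY[of y] Xa y by auto
    moreover have "Y y \<noteq> b" using XY[of y] Xb y by auto
    ultimately have Yyo: "Y y \<in> {a<..<b}" using Yy by auto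
    have ic: "isCont Y y"
      using continuous_on_interior[OF cY, of y] y by (simp add: interior_atLeastAtMost_real)
    have "(Y has_real_derivative inverse (k (Y y))) (at y)"
      apply (rule DERIV_inverse_function[where f = X and a = 0 and b = "2*l"])
      using dXo[OF Yyo] apply simp
      using kp[OF Yy] apply simp
      using y apply auto[2]
      using XY apply simp
      using ic .
    then have "((\<lambda>x. Y (x + l)) has_real_derivative inverse (k (Y y)) * 1) (at x)"
      unfolding y_def by (intro DERIV_chain2[of Y] derivative_eq_intros) auto
    then show ?thesis unfolding w_def[abs_def] y_def by simp
  qed
  show ?thesis using cw w1 w2 win dw by blast
qed



lemma recip_diff_bound:
  fixes H hm p q \<eta> :: real
  assumes "hm > 0" "hm \<le> H" "\<eta> > 0" "\<eta> \<le> p" "\<eta> \<le> q"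
  shows "\<bar>1/(H*p) - 1/(H*q)\<bar> \<le> \<bar>q - p\<bar> / (hm*\<eta>*\<eta>)"
proof -
  have pos: "H > 0" "p > 0" "q > 0" using assms by auto
  have "1/(H*p) - 1/(H*q) = (q - p)/(H*p*q)" using pos by (simp add: field_simps)
  then have "\<bar>1/(H*p) - 1/(H*q)\<bar> = \<bar>q - p\<bar>/(H*p*q)" using pos by (simp add: abs_divide)
  also have "\<dots> \<le> \<bar>q - p\<bar> / (hm*\<eta>*\<eta>)"
  proof (rule frac_le)
    show "hm*\<eta>*\<eta> \<le> H*p*q" using assms by (intro mult_mono) (auto intro: mult_nonneg_nonneg)
  qed (use assms in auto)
  finally show ?thesis .
qed

lemma recip_le:
  fixes x y :: real
  assumes "0 < y" "y \<le> x"
  shows "1/x \<le> 1/y"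
  using assms by (simp add: frac_le)

lemma T_upper:
  fixes h g :: "real \<Rightarrow> real"
  assumes ab: "a \<le> b" and ch: "continuous_on {a..b} h" and cg: "continuous_on {a..b} g"
    and hm: "hm > 0" "\<And>s. s \<in> {a..b} \<Longrightarrow> hm \<le> h s"
    and gG: "\<And>s. s \<in> {a..b} \<Longrightarrow> g s \<le> G" and GD: "G < D"
  shows "integral {a..b} (\<lambda>s. 1/(h s*(D - g s))) \<le> (b - a) * (1/(hm*(D - G)))"
proof -
  have nz: "h s * (D - g s) \<noteq> 0" if "s \<in> {a..b}" for s
    using hm gG[OF that] GD that by (metis diff_gt_0_iff_gt mult_pos_pos order_less_le_trans order_le_less_trans less_irrefl)
  have int: "(\<lambda>s. 1/(h s*(D - g s))) integrable_on {a..b}"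
    apply (rule integrable_continuous_interval) apply (intro continuous_intros ch cg) using nz by auto
  have "integral {a..b} (\<lambda>s. 1/(h s*(D - g s))) \<le> integral {a..b} (\<lambda>s. 1/(hm*(D - G)))"
  proof (rule integral_le[OF int])
    fix s assume s: "s \<in> {a..b}"
    show "1/(h s*(D - g s)) \<le> 1/(hm*(D - G))"
      apply (rule recip_le)
      using hm GD apply simp
      apply (rule mult_mono) apply (rule hm(2)[OF s]) using GD gG[OF s] apply simp
      using hm(1) hm(2)[OF s] apply linarith using GD by simp
  qed (rule integrable_continuous_interval[OF continuous_on_const])
  also have "\<dots> = (b - a) * (1/(hm*(D - G)))" using ab by simp
  finally show ?thesis .
qed

lemma T_lower:
  fixes h g :: "real \<Rightarrow> real"
  assumes ab: "a \<le> s0" "s0 < b" and ch: "continuous_on {a..b} h" and cg: "continuous_on {a..b} g"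
    and hp: "\<And>s. s \<in> {a..b} \<Longrightarrow> 0 < h s" and hM: "\<And>s. s \<in> {a..b} \<Longrightarrow> h s \<le> hM"
    and lip: "\<And>s. s \<in> {s0..b} \<Longrightarrow> g s0 - g s \<le> Kp * (s - s0)"
    and gmax: "\<And>s. s \<in> {a..b} \<Longrightarrow> g s \<le> g s0"
    and Kp: "Kp > 0" and eta: "\<eta> > 0"
  shows "(ln (\<eta> + Kp*(b - s0)) - ln \<eta>)/(Kp*hM) \<le> integral {a..b} (\<lambda>s. 1/(h s*(g s0 + \<eta> - g s)))"
proof -
  have hM0: "hM > 0" using hp[of a] hM[of a] ab by force
  have pos: "h s * (g s0 + \<eta> - g s) > 0" if "s \<in> {a..b}" for s
    using hp[OF that] gmax[OF that] eta by simp
  have cont: "continuous_on {a..b} (\<lambda>s. 1/(h s*(g s0 + \<eta> - g s)))"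
    using pos by (intro continuous_intros ch cg) (metis less_irrefl)
  have int: "(\<lambda>s. 1/(h s*(g s0 + \<eta> - g s))) integrable_on {a..b}"
    by (rule integrable_continuous_interval[OF cont])
  have int2: "(\<lambda>s. 1/(h s*(g s0 + \<eta> - g s))) integrable_on {s0..b}"
    by (rule integrable_continuous_interval) (rule continuous_on_subset[OF cont], use ab in auto)
  define F where "F s = ln (\<eta> + Kp*(s - s0))/(Kp*hM)" for s
  have dF: "(F has_real_derivative 1/(hM*(\<eta> + Kp*(s - s0)))) (at s)" if "s \<in> {s0..b}" for s
  proof -
    have p: "\<eta> + Kp*(s - s0) > 0" using that eta Kp by (simp add: add_pos_nonneg)
    have d1: "((\<lambda>s. \<eta> + Kp*(s - s0)) has_real_derivative Kp) (at s)"
      by (auto intro!: derivative_eq_intros)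
    have d2: "(ln has_real_derivative inverse (\<eta> + Kp*(s - s0))) (at (\<eta> + Kp*(s - s0)))"
      using DERIV_ln p .
    have "((\<lambda>s. ln (\<eta> + Kp*(s - s0))) has_real_derivative inverse (\<eta> + Kp*(s - s0)) * Kp) (at s)"
      using DERIV_chain2[OF d2 d1] .
    then have d3: "(F has_real_derivative inverse (\<eta> + Kp*(s - s0)) * Kp / (Kp*hM)) (at s)"
      unfolding F_def[abs_def] by (rule DERIV_cdivide)
    have eq: "inverse (\<eta> + Kp*(s - s0)) * Kp / (Kp*hM) = 1/(hM*(\<eta> + Kp*(s - s0)))"
    proof -
      have "\<And>x. x > 0 \<Longrightarrow> inverse x * Kp / (Kp*hM) = 1/(hM*x)" using hM0 Kp by (simp add: field_simps)
      then show ?thesis using p by blast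
    qed
    show ?thesis using d3 unfolding eq .
  qed
  have "((\<lambda>s. 1/(hM*(\<eta> + Kp*(s - s0)))) has_integral (F b - F s0)) {s0..b}"
    apply (rule fundamental_theorem_of_calculus) using ab apply simp
    using dF by (simp add: has_real_derivative_iff_has_vector_derivative[symmetric] has_field_derivative_at_within)
  then have I: "integral {s0..b} (\<lambda>s. 1/(hM*(\<eta> + Kp*(s - s0)))) = (ln (\<eta> + Kp*(b - s0)) - ln \<eta>)/(Kp*hM)"
    unfolding F_def by (simp add: integral_unique diff_divide_distrib)
  have "integral {s0..b} (\<lambda>s. 1/(hM*(\<eta> + Kp*(s - s0)))) \<le> integral {s0..b} (\<lambda>s. 1/(h s*(g s0 + \<eta> - g s)))"
  proof (rule integral_le)
    show "(\<lambda>s. 1/(hM*(\<eta> + Kp*(s - s0)))) integrable_on {s0..b}"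
      using \<open>((\<lambda>s. 1/(hM*(\<eta> + Kp*(s - s0)))) has_integral _) _\<close> by blast
    show "(\<lambda>s. 1/(h s*(g s0 + \<eta> - g s))) integrable_on {s0..b}" by (rule int2)
    fix s assume s: "s \<in> {s0..b}"
    then have sab: "s \<in> {a..b}" using ab by auto
    show "1/(hM*(\<eta> + Kp*(s - s0))) \<le> 1/(h s*(g s0 + \<eta> - g s))"
      apply (rule recip_le)
      using pos[OF sab] apply simp
      apply (rule mult_mono) using hM[OF sab] lip[OF s] hp[OF sab] hM0 eta Kp s gmax[OF sab] by auto
  qed
  also have "\<dots> \<le> integral {a..b} (\<lambda>s. 1/(h s*(g s0 + \<eta> - g s)))"
    apply (rule integral_subset_le) using ab apply auto[1]
    using int2 int apply auto[2]
    using pos by (simp add: less_imp_le)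
  finally show ?thesis using I by simp
qed

lemma T_lip:
  fixes h g :: "real \<Rightarrow> real"
  assumes ab: "a \<le> b" and ch: "continuous_on {a..b} h" and cg: "continuous_on {a..b} g"
    and hm: "hm > 0" "\<And>s. s \<in> {a..b} \<Longrightarrow> hm \<le> h s"
    and eta: "\<eta> > 0" and D: "\<And>s. s \<in> {a..b} \<Longrightarrow> g s + \<eta> \<le> D1"
  shows "continuous_on {D1..D2} (\<lambda>D. integral {a..b} (\<lambda>s. 1/(h s*(D - g s))))"
proof -
  have int: "(\<lambda>s. 1/(h s*(D - g s))) integrable_on {a..b}" if "D \<ge> D1" for D
  proof -
    have nz: "h s * (D - g s) \<noteq> 0" if "s \<in> {a..b}" for s
      using hm(1) hm(2)[OF that] D[OF that] eta \<open>D \<ge> D1\<close>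
      by (metis add_le_same_cancel1 diff_gt_0_iff_gt dual_order.trans linorder_not_le mult_pos_pos order_less_le)
    show ?thesis
      apply (rule integrable_continuous_interval) apply (intro continuous_intros ch cg) using nz by auto
  qed
  define L where "L = (b - a) / (hm*\<eta>*\<eta>)"
  have "L-lipschitz_on {D1..D2} (\<lambda>D. integral {a..b} (\<lambda>s. 1/(h s*(D - g s))))"
  proof (rule lipschitz_onI)
    show "0 \<le> L" unfolding L_def using ab hm eta by simp
    fix D D' assume DD: "D \<in> {D1..D2}" "D' \<in> {D1..D2}"
    have "integral {a..b} (\<lambda>s. 1/(h s*(D - g s))) - integral {a..b} (\<lambda>s. 1/(h s*(D' - g s)))
        = integral {a..b} (\<lambda>s. 1/(h s*(D - g s)) - 1/(h s*(D' - g s)))"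
      using int DD by (simp add: integral_diff)
    also have "\<bar>\<dots>\<bar> \<le> integral {a..b} (\<lambda>s. \<bar>D' - D\<bar> / (hm*\<eta>*\<eta>))"
    proof -
      have "norm (integral {a..b} (\<lambda>s. 1/(h s*(D - g s)) - 1/(h s*(D' - g s)))) \<le> integral {a..b} (\<lambda>s. \<bar>D' - D\<bar> / (hm*\<eta>*\<eta>))"
      proof (rule integral_norm_bound_integral)
        show "(\<lambda>s. 1/(h s*(D - g s)) - 1/(h s*(D' - g s))) integrable_on {a..b}"
          using int DD by (intro integrable_diff) auto
        fix s assume s: "s \<in> {a..b}"
        have "\<bar>1/(h s*(D - g s)) - 1/(h s*(D' - g s))\<bar> \<le> \<bar>(D' - g s) - (D - g s)\<bar> / (hm*\<eta>*\<eta>)"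
          apply (rule recip_diff_bound) using hm s D[OF s] DD eta by auto
        then show "norm (1/(h s*(D - g s)) - 1/(h s*(D' - g s))) \<le> \<bar>D' - D\<bar> / (hm*\<eta>*\<eta>)" by simp
      qed (rule integrable_continuous_interval[OF continuous_on_const])
      then show ?thesis by simp
    qed
    also have "\<dots> = L * \<bar>D - D'\<bar>" unfolding L_def using ab by (simp add: abs_minus_commute)
    finally show "dist (integral {a..b} (\<lambda>s. 1/(h s*(D - g s)))) (integral {a..b} (\<lambda>s. 1/(h s*(D' - g s)))) \<le> L * dist D D'"
      by (simp add: dist_real_def)
  qed
  then show ?thesis by (rule lipschitz_on_continuous_on)
qed



lemma exist_gen:
  fixes h g :: "real \<Rightarrow> real"
  assumes ab: "a < b" and l: "l > 0" and ch: "continuous_on {a..b} h"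
    and hp: "\<And>s. s \<in> {a..b} \<Longrightarrow> h s > 0" and cg: "continuous_on {a..b} g"
    and lip: "\<And>s t. s \<in> {a..b} \<Longrightarrow> t \<in> {a..b} \<Longrightarrow> \<bar>g s - g t\<bar> \<le> K * \<bar>s - t\<bar>"
    and gab: "g a = g b"
  shows "\<exists>D w. (\<forall>s\<in>{a..b}. g s < D) \<and> continuous_on {-l..l} w \<and> w (-l) = a \<and> w l = b \<and>
     (\<forall>x\<in>{-l..l}. w x \<in> {a..b}) \<and>
     (\<forall>x\<in>{-l<..<l}. (w has_real_derivative h (w x) * (D - g (w x))) (at x))"
proof -
  have ne: "{a..b} \<noteq> {}" using ab by simp
  obtain s1 where s1: "s1 \<in> {a..b}" "\<And>s. s \<in> {a..b} \<Longrightarrow> g s \<le> g s1"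
    using continuous_attains_sup[OF compact_Icc ne cg] by blast
  obtain s0 where s0: "a \<le> s0" "s0 < b" "\<And>s. s \<in> {a..b} \<Longrightarrow> g s \<le> g s0"
  proof (cases "s1 = b")
    case True then show ?thesis using that[of a] s1 gab ab by auto
  next
    case False then show ?thesis using that[of s1] s1 by auto
  qed
  obtain smin where smin: "smin \<in> {a..b}" "\<And>s. s \<in> {a..b} \<Longrightarrow> h smin \<le> h s"
    using continuous_attains_inf[OF compact_Icc ne ch] by blast
  obtain smax where smax: "smax \<in> {a..b}" "\<And>s. s \<in> {a..b} \<Longrightarrow> h s \<le> h smax"
    using continuous_attains_sup[OF compact_Icc ne ch] by blast
  define hm where "hm = h smin"
  define hM where "hM = h smax"
  have hm: "hm > 0" unfolding hm_def using hp smin by auto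
  have hM: "hM > 0" unfolding hM_def using hp smax by auto
  have hMb: "\<And>s. s \<in> {a..b} \<Longrightarrow> h s \<le> hM" unfolding hM_def using smax(2) .
  have hmb: "\<And>s. s \<in> {a..b} \<Longrightarrow> hm \<le> h s" unfolding hm_def using smin(2) .
  define Kp where "Kp = \<bar>K\<bar> + 1"
  have Kp: "Kp > 0" unfolding Kp_def by simp
  have lipK: "g s0 - g s \<le> Kp * (s - s0)" if "s \<in> {s0..b}" for s
  proof -
    have "g s0 - g s \<le> \<bar>g s0 - g s\<bar>" by simp
    also have "\<dots> \<le> K * \<bar>s0 - s\<bar>" using lip[of s0 s] that s0 by auto
    also have "\<dots> \<le> Kp * \<bar>s0 - s\<bar>" unfolding Kp_def by (intro mult_right_mono) auto
    also have "\<dots> = Kp * (s - s0)" using that by simp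
    finally show ?thesis .
  qed
  define \<eta> where "\<eta> = Kp * (b - s0) * exp (-(2*l*Kp*hM))"
  have eta: "\<eta> > 0" unfolding \<eta>_def using Kp s0 by simp
  define T where "T D = integral {a..b} (\<lambda>s. 1/(h s*(D - g s)))" for D
  define D1 where "D1 = g s0 + \<eta>"
  have TD1: "2 * l \<le> T D1"
  proof -
    have "(ln (\<eta> + Kp*(b - s0)) - ln \<eta>)/(Kp*hM) \<le> T D1"
      unfolding T_def D1_def
      by (rule T_lower[OF s0(1,2) ch cg hp hMb lipK s0(3) Kp eta])
    moreover have "2 * l \<le> (ln (\<eta> + Kp*(b - s0)) - ln \<eta>)/(Kp*hM)"
    proof -
      have kb: "Kp * (b - s0) > 0" using Kp s0 by simp
      have "ln \<eta> = ln (Kp * (b - s0)) - 2*l*Kp*hM" unfolding \<eta>_def using kb s0 by (subst ln_mult) auto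
      moreover have "ln (Kp * (b - s0)) \<le> ln (\<eta> + Kp*(b - s0))" using kb eta by simp
      ultimately have "2*l*Kp*hM \<le> ln (\<eta> + Kp*(b - s0)) - ln \<eta>" by simp
      moreover have "2*l*Kp*hM = 2 * l * (Kp*hM)" by simp
      ultimately show ?thesis using Kp hM by (simp add: le_divide_eq)
    qed
    ultimately show ?thesis by simp
  qed
  define D2 where "D2 = max D1 (g s0 + (b - a)/(hm*(2*l)))"
  have TD2: "T D2 \<le> 2 * l"
  proof -
    have X: "D2 - g s0 \<ge> (b - a)/(hm*(2*l))" unfolding D2_def by simp
    have Xp: "D2 - g s0 > 0" unfolding D2_def D1_def using eta by simp
    have "T D2 \<le> (b - a) * (1/(hm*(D2 - g s0)))"
      unfolding T_def
      apply (rule T_upper[OF _ ch cg hm hmb s0(3)])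
      using ab Xp by simp_all
    also have "\<dots> \<le> 2 * l"
    proof -
      have "b - a \<le> hm*(2*l) * (D2 - g s0)" using X hm l by (simp add: divide_le_eq mult.commute)
      then show ?thesis using hm Xp by (simp add: divide_le_eq mult.commute mult.left_commute)
    qed
    finally show ?thesis .
  qed
  have D12: "D1 \<le> D2" unfolding D2_def by simp
  have hD1: "g s + \<eta> \<le> D1" if "s \<in> {a..b}" for s using s0(3)[OF that] unfolding D1_def by simp
  have cT: "continuous_on {D1..D2} T"
    unfolding T_def[abs_def]
    by (rule T_lip[OF _ ch cg hm hmb eta hD1]) (use ab in simp)
  obtain D where D: "D1 \<le> D" "D \<le> D2" "T D = 2 * l"
    using IVT2'[of T D2 "2*l" D1, OF TD2 TD1 D12 cT] by blast
  have gD: "g s + \<eta> \<le> D" if "s \<in> {a..b}" for s using s0(3)[OF that] D(1) D1_def by simp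
  define k where "k s = 1/(h s*(D - g s))" for s
  have kp: "k s > 0" if "s \<in> {a..b}" for s unfolding k_def using hp[OF that] gD[OF that] eta by simp
  have ck: "continuous_on {a..b} k" unfolding k_def[abs_def]
    apply (intro continuous_intros ch cg) using kp k_def by fastforce
  have tot: "integral {a..b} k = 2 * l" using D(3) unfolding T_def k_def[abs_def] .
  obtain w where w: "continuous_on {-l..l} w" "w (-l) = a" "w l = b" "\<forall>x\<in>{-l..l}. w x \<in> {a..b}"
    "\<forall>x\<in>{-l<..<l}. (w has_real_derivative inverse (k (w x))) (at x)"
    using inv_quad[OF ab l ck kp tot] by blast
  have "\<forall>x\<in>{-l<..<l}. (w has_real_derivative h (w x) * (D - g (w x))) (at x)"
  proof
    fix x assume x: "x \<in> {-l<..<l}"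
    have "inverse (k (w x)) = h (w x) * (D - g (w x))" unfolding k_def by simp
    then show "(w has_real_derivative h (w x) * (D - g (w x))) (at x)" using w(5) x by metis
  qed
  moreover have "\<forall>s\<in>{a..b}. g s < D" using gD eta by fastforce
  ultimately show ?thesis using w by blast
qed



lemma alg1:
  fixes s n e vm U C p :: real
  assumes s: "s > 0" and n: "n > 0" and e: "e > 0" and vm: "vm > 0"
    and h: "vm^2 / s + p - e * n * ((0 * s - vm * U) / (s * s)) = C"
  shows "U = (C * s^2 - vm^2 * s - s^2 * p)/(e * vm * n)"
proof -
  have "e * n * vm * U / (s * s) = C - vm^2/s - p" using h by (simp add: algebra_simps)
  then have "e * n * vm * U = (C - vm^2/s - p) * (s * s)" using s by (simp add: divide_eq_eq)
  also have "\<dots> = C * s^2 - vm^2 * s - s^2 * p" using s by (simp add: algebra_simps power2_eq_square)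
  finally show ?thesis using n e vm by (simp add: eq_divide_eq algebra_simps)
qed

lemma alg2:
  fixes s n e vm U C p :: real
  assumes s: "s > 0" and n: "n > 0" and e: "e > 0" and vm: "vm > 0"
    and h: "U = (C * s^2 - vm^2 * s - s^2 * p)/(e * vm * n)"
  shows "vm^2 / s + p - e * n * ((0 * s - vm * U) / (s * s)) = C"
proof -
  have "e * n * vm * U = C * s^2 - vm^2 * s - s^2 * p" using h n e vm by (simp add: field_simps)
  also have "\<dots> = (C - vm^2/s - p) * (s * s)" using s by (simp add: algebra_simps power2_eq_square)
  finally have "e * n * vm * U / (s * s) = C - vm^2/s - p" using s by (simp add: divide_eq_eq)
  then show ?thesis by (simp add: algebra_simps)
qed

lemma sol_ode:
  fixes P \<nu> u v :: "real \<Rightarrow> real"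
  assumes l: "l > 0" and eps: "\<epsilon> > 0" and vm: "vm > 0"
    and nu_pos: "\<And>s. s > 0 \<Longrightarrow> \<nu> s > 0"
    and S: "stationary_solution P \<nu> \<epsilon> l um up vm u v"
  shows "(\<forall>x\<in>{-l..l}. v x = vm) \<and>
    (\<exists>C. \<forall>x\<in>{-l<..<l}. (u has_real_derivative (C * (u x)^2 - vm^2 * (u x) - (u x)^2 * P (u x))/(\<epsilon> * vm * \<nu> (u x))) (at x))"
proof -
  note D = S[unfolded stationary_solution_def]
  have cu: "continuous_on {-l..l} u" and cv: "continuous_on {-l..l} v"
    and upos: "\<And>x. x \<in> {-l..l} \<Longrightarrow> u x > 0"
    and udiff: "\<And>x. x \<in> {-l<..<l} \<Longrightarrow> u differentiable (at x)"
    and vder: "\<And>x. x \<in> {-l<..<l} \<Longrightarrow> (v has_real_derivative 0) (at x)"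
    and flux: "\<And>x. x \<in> {-l<..<l} \<Longrightarrow> ((\<lambda>y. (v y)^2 / u y + P (u y) - \<epsilon> * \<nu> (u y) * deriv (\<lambda>z. v z / u z) y)
           has_real_derivative 0) (at x)"
    and vl: "v (-l) = vm"
    using D by auto
  have vc: "v x = vm" if x: "x \<in> {-l..l}" for x
  proof (cases "x = -l")
    case True then show ?thesis using vl by simp
  next
    case False
    then have "-l < x" using x by auto
    have "v x = v (-l)"
      apply (rule DERIV_isconst_end[OF \<open>-l < x\<close>])
      apply (rule continuous_on_subset[OF cv]) using x apply auto[1]
      using vder x by auto
    then show ?thesis using vl by simp
  qed
  define \<Phi> where "\<Phi> y = (v y)^2 / u y + P (u y) - \<epsilon> * \<nu> (u y) * deriv (\<lambda>z. v z / u z) y" for y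
  have dPhi: "(\<Phi> has_real_derivative 0) (at y)" if "y \<in> {-l<..<l}" for y
    unfolding \<Phi>_def[abs_def] using flux[OF that] .
  have cPhi: "continuous_on {p..q} \<Phi>" if "{p..q} \<subseteq> {-l<..<l}" for p q
    apply (rule continuous_at_imp_continuous_on)
    using dPhi that DERIV_isCont by blast
  have Phic: "\<Phi> y = \<Phi> 0" if y: "y \<in> {-l<..<l}" for y
  proof -
    consider "y < 0" | "y = 0" | "0 < y" by linarith
    then show ?thesis
    proof cases
      case 1
      have "\<Phi> 0 = \<Phi> y"
        apply (rule DERIV_isconst_end[OF 1 cPhi])
        using y l apply auto[1]
        apply (rule dPhi) using y by auto
      then show ?thesis by simp
    next
      case 2 then show ?thesis by simp
    next
      case 3
      show "\<Phi> y = \<Phi> 0"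
        apply (rule DERIV_isconst_end[OF 3 cPhi])
        using y l apply auto[1]
        apply (rule dPhi) using y by auto
    qed
  qed
  define C where "C = \<Phi> 0"
  have "\<forall>x\<in>{-l<..<l}. (u has_real_derivative (C * (u x)^2 - vm^2 * (u x) - (u x)^2 * P (u x))/(\<epsilon> * vm * \<nu> (u x))) (at x)"
  proof
    fix y assume y: "y \<in> {-l<..<l}"
    have y': "y \<in> {-l..l}" using y by auto
    have du: "(u has_real_derivative deriv u y) (at y)"
      using udiff[OF y] DERIV_deriv_iff_real_differentiable by blast
    have "((\<lambda>z. v z / u z) has_real_derivative (0 * u y - v y * deriv u y) / (u y * u y)) (at y)"
      using DERIV_divide[OF vder[OF y] du] upos[OF y'] by simp
    then have dq: "deriv (\<lambda>z. v z / u z) y = (0 * u y - vm * deriv u y) / (u y * u y)"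
      using vc[OF y'] DERIV_imp_deriv by simp
    have "\<Phi> y = C" unfolding C_def using Phic[OF y] .
    then have "vm^2 / u y + P (u y) - \<epsilon> * \<nu> (u y) * ((0 * u y - vm * deriv u y) / (u y * u y)) = C"
      unfolding \<Phi>_def dq vc[OF y'] .
    then have "deriv u y = (C * (u y)^2 - vm^2 * (u y) - (u y)^2 * P (u y))/(\<epsilon> * vm * \<nu> (u y))"
      by (rule alg1[OF upos[OF y'] nu_pos[OF upos[OF y']] eps vm])
    then show "(u has_real_derivative (C * (u y)^2 - vm^2 * (u y) - (u y)^2 * P (u y))/(\<epsilon> * vm * \<nu> (u y))) (at y)"
      using du by simp
  qed
  then show ?thesis using vc by blast
qed

lemma ode_sol:
  fixes P \<nu> u :: "real \<Rightarrow> real"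
  assumes l: "l > 0" and eps: "\<epsilon> > 0" and vm: "vm > 0"
    and nu_pos: "\<And>s. s > 0 \<Longrightarrow> \<nu> s > 0"
    and cu: "continuous_on {-l..l} u" and upos: "\<And>x. x \<in> {-l..l} \<Longrightarrow> u x > 0"
    and du: "\<And>x. x \<in> {-l<..<l} \<Longrightarrow> (u has_real_derivative (C * (u x)^2 - vm^2 * (u x) - (u x)^2 * P (u x))/(\<epsilon> * vm * \<nu> (u x))) (at x)"
    and e1: "u (-l) = um" and e2: "u l = up"
  shows "stationary_solution P \<nu> \<epsilon> l um up vm u (\<lambda>_. vm)"
proof -
  have fl: "vm^2 / u y + P (u y) - \<epsilon> * \<nu> (u y) * deriv (\<lambda>z. vm / u z) y = C" if y: "y \<in> {-l<..<l}" for y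
  proof -
    have y': "y \<in> {-l..l}" using y by auto
    define U where "U = (C * (u y)^2 - vm^2 * (u y) - (u y)^2 * P (u y))/(\<epsilon> * vm * \<nu> (u y))"
    have "((\<lambda>z. vm / u z) has_real_derivative (0 * u y - vm * U) / (u y * u y)) (at y)"
    proof (rule DERIV_divide[OF DERIV_const])
      show "(u has_real_derivative U) (at y)" unfolding U_def by (rule du[OF y])
      show "u y \<noteq> 0" using upos[OF y'] by simp
    qed
    then have dq: "deriv (\<lambda>z. vm / u z) y = (0 * u y - vm * U) / (u y * u y)"
      using DERIV_imp_deriv by blast
    show ?thesis unfolding dq
      by (rule alg2[OF upos[OF y'] nu_pos[OF upos[OF y']] eps vm U_def])
  qed
  have "((\<lambda>y. (vm)^2 / u y + P (u y) - \<epsilon> * \<nu> (u y) * deriv (\<lambda>z. vm / u z) y) has_real_derivative 0) (at x)"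
    if x: "x \<in> {-l<..<l}" for x
    by (rule has_field_derivative_transform_within_open[OF DERIV_const[of C "at x"] _ x]) (use fl in auto)
  moreover have "u differentiable (at x)" if "x \<in> {-l<..<l}" for x
    using du[OF that] real_differentiable_def by blast
  ultimately show ?thesis unfolding stationary_solution_def
    using cu upos e1 e2 by (auto intro: continuous_on_const)
qed



theorem theorem1p2:
  fixes P P' P'' \<nu> \<nu>' :: "real \<Rightarrow> real"
    and l \<epsilon> um up vm vs :: real
  assumes l_pos: "l > 0" and eps_pos: "\<epsilon> > 0"
    and vm_pos: "vm > 0" and um_pos: "um > 0" and up_pos: "up > 0"
    and vs_def: "vs = vm"
    and P0: "P 0 = 0"
    and P_cont0: "continuous_on {0..} P"
    and P_infty: "filterlim P at_top at_top"
    and P_deriv: "\<And>u. u > 0 \<Longrightarrow> (P has_real_derivative P' u) (at u)"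
    and P'_deriv: "\<And>u. u > 0 \<Longrightarrow> (P' has_real_derivative P'' u) (at u)"
    and P''_cont: "continuous_on {0<..} P''"
    and P'_pos: "\<And>u. u > 0 \<Longrightarrow> P' u > 0"
    and P''_pos: "\<And>u. u > 0 \<Longrightarrow> P'' u > 0"
    and nu_deriv: "\<And>u. u > 0 \<Longrightarrow> (\<nu> has_real_derivative \<nu>' u) (at u)"
    and nu'_cont: "continuous_on {0<..} \<nu>'"
    and nu_pos: "\<And>u. u > 0 \<Longrightarrow> \<nu> u > 0"
    and f_welldef: "\<And>u. u > 0 \<Longrightarrow> (\<lambda>z. P z / z\<^sup>2) integrable_on {0..u}"
    and RH: "vs\<^sup>2 * (up - um) = um * up * (P up - P um)"
    and entropy: "(vs ^ 3 / (2 * up\<^sup>2) + vs * deriv (f_of P) up)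
                  - (vs ^ 3 / (2 * um\<^sup>2) + vs * deriv (f_of P) um) \<le> 0"
  shows "\<exists>ub vb. stationary_solution P \<nu> \<epsilon> l um up vm ub vb \<and>
           (\<forall>u v. stationary_solution P \<nu> \<epsilon> l um up vm u v \<longrightarrow>
              (\<forall>x\<in>{-l..l}. u x = ub x \<and> v x = vb x))"
proof -
  define Fc where "Fc C s = (C * s^2 - vm^2 * s - s^2 * P s) / (\<epsilon> * vm * \<nu> s)" for C s
  define g0 where "g0 s = vm^2 / s + P s" for s
  define H where "H s = s^2 / (\<epsilon> * vm * \<nu> s)" for s
  have cP: "continuous_on {0<..} P"
    by (rule continuous_at_imp_continuous_on) (use P_deriv DERIV_isCont in auto)
  have cP': "continuous_on {0<..} P'"
    by (rule continuous_at_imp_continuous_on) (use P'_deriv DERIV_isCont in auto)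
  have cnu: "continuous_on {0<..} \<nu>"
    by (rule continuous_at_imp_continuous_on) (use nu_deriv DERIV_isCont in auto)
  have nz: "\<epsilon> * vm * \<nu> s \<noteq> 0" if "s > 0" for s using eps_pos vm_pos nu_pos[OF that] by simp
  have cFc: "continuous_on {0<..} (Fc C)" for C
    unfolding Fc_def[abs_def] by (intro continuous_intros cP cnu) (use nz in auto)
  have HFc: "H s * (C - g0 s) = Fc C s" if "s > 0" for s C
    unfolding H_def g0_def Fc_def using that nz[OF that] by (simp add: field_simps power2_eq_square)
  have Fc_mono: "Fc C2 s < Fc C1 s" if "s > 0" "C2 < C1" for s C1 C2
  proof -
    have "Fc C1 s - Fc C2 s = (C1 - C2) * s^2 / (\<epsilon> * vm * \<nu> s)"
      unfolding Fc_def using nz[OF that(1)] by (simp add: field_simps)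
    moreover have "(C1 - C2) * s^2 / (\<epsilon> * vm * \<nu> s) > 0"
      using that eps_pos vm_pos nu_pos[OF that(1)] by simp
    ultimately show ?thesis by simp
  qed
  have gRH: "g0 um = g0 up"
  proof -
    have "vm^2 * (up - um) = um * up * (P up - P um)" using RH vs_def by simp
    then have "vm^2 * (up - um) / (um * up) = P up - P um" using um_pos up_pos by (simp add: field_simps)
    moreover have "vm^2 * (up - um) / (um * up) = vm^2 / um - vm^2 / up" using um_pos up_pos by (simp add: field_simps)
    ultimately show ?thesis unfolding g0_def by simp
  qed
  have g0lip: "\<exists>K. \<forall>s\<in>{p..q}. \<forall>t\<in>{p..q}. \<bar>g0 s - g0 t\<bar> \<le> K * \<bar>s - t\<bar>" if p: "p > 0" for p q
  proof (rule C1_lip)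
    fix s assume s: "s \<in> {p..q}"
    then have s0: "s > 0" using p by simp
    show "(g0 has_real_derivative ((0 * s - vm^2 * 1) / (s * s) + P' s)) (at s)"
      unfolding g0_def[abs_def]
      by (rule DERIV_add[OF DERIV_divide[OF DERIV_const DERIV_ident] P_deriv[OF s0]]) (use s0 in simp)
  next
    have sub: "{p..q} \<subseteq> {0<..}" using p by auto
    show "continuous_on {p..q} (\<lambda>s. (0 * s - vm^2 * 1) / (s * s) + P' s)"
      by (intro continuous_intros continuous_on_subset[OF cP' sub]) (use p in auto)
  qed
  have Fclip: "\<exists>L. \<forall>s\<in>{p..q}. \<forall>t\<in>{p..q}. \<bar>Fc C s - Fc C t\<bar> \<le> L * \<bar>s - t\<bar>" if p: "p > 0" for p q C
  proof (rule C1_lip)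
    fix s assume s: "s \<in> {p..q}"
    then have s0: "s > 0" using p by simp
    have dN: "((\<lambda>s. C * s^2 - vm^2 * s - s^2 * P s) has_real_derivative
        (C * (2 * s) - vm^2 - (2 * s * P s + s^2 * P' s))) (at s)"
      by (auto intro!: derivative_eq_intros P_deriv[OF s0] simp: power2_eq_square algebra_simps)
    have dQ: "((\<lambda>s. \<epsilon> * vm * \<nu> s) has_real_derivative \<epsilon> * vm * \<nu>' s) (at s)"
      by (rule DERIV_cmult[OF nu_deriv[OF s0]])
    show "(Fc C has_real_derivative
        ((C * (2 * s) - vm^2 - (2 * s * P s + s^2 * P' s)) * (\<epsilon> * vm * \<nu> s) - (C * s^2 - vm^2 * s - s^2 * P s) * (\<epsilon> * vm * \<nu>' s))
          / ((\<epsilon> * vm * \<nu> s) * (\<epsilon> * vm * \<nu> s))) (at s)"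
      unfolding Fc_def[abs_def] by (rule DERIV_divide[OF dN dQ nz[OF s0]])
  next
    have sub: "{p..q} \<subseteq> {0<..}" using p by auto
    show "continuous_on {p..q} (\<lambda>s. ((C * (2 * s) - vm^2 - (2 * s * P s + s^2 * P' s)) * (\<epsilon> * vm * \<nu> s) - (C * s^2 - vm^2 * s - s^2 * P s) * (\<epsilon> * vm * \<nu>' s))
          / ((\<epsilon> * vm * \<nu> s) * (\<epsilon> * vm * \<nu> s)))"
      by (intro continuous_intros continuous_on_subset[OF cP' sub] continuous_on_subset[OF cP sub]
          continuous_on_subset[OF cnu sub] continuous_on_subset[OF nu'_cont sub]) (use p nz in auto)
  qed
  obtain C0 ub where ub: "continuous_on {-l..l} ub" "\<And>x. x \<in> {-l..l} \<Longrightarrow> ub x > 0"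
    "\<And>x. x \<in> {-l<..<l} \<Longrightarrow> (ub has_real_derivative Fc C0 (ub x)) (at x)"
    "ub (-l) = um" "ub l = up"
  proof -
    consider "um < up" | "um = up" | "up < um" by linarith
    then show ?thesis
    proof cases
      case 1
      have sub: "{um..up} \<subseteq> {0<..}" using um_pos by auto
      obtain K where K: "\<forall>s\<in>{um..up}. \<forall>t\<in>{um..up}. \<bar>g0 s - g0 t\<bar> \<le> K * \<bar>s - t\<bar>" using g0lip[OF um_pos] by blast
      have ch: "continuous_on {um..up} H" unfolding H_def[abs_def]
        by (intro continuous_intros continuous_on_subset[OF cnu sub]) (use sub nz in auto)
      have hp: "\<And>s. s \<in> {um..up} \<Longrightarrow> H s > 0" unfolding H_def using um_pos eps_pos vm_pos nu_pos by auto
      have cg: "continuous_on {um..up} g0" unfolding g0_def[abs_def]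
        by (intro continuous_intros continuous_on_subset[OF cP sub]) (use sub in auto)
      obtain D w where Dw: "\<forall>s\<in>{um..up}. g0 s < D" "continuous_on {-l..l} w" "w (-l) = um" "w l = up"
        "\<forall>x\<in>{-l..l}. w x \<in> {um..up}"
        "\<forall>x\<in>{-l<..<l}. (w has_real_derivative H (w x) * (D - g0 (w x))) (at x)"
        using exist_gen[OF 1 l_pos ch hp cg _ gRH, of K] K by blast
      show ?thesis
      proof (rule that[of w D])
        show "continuous_on {-l..l} w" by (rule Dw(2))
        show "w x > 0" if "x \<in> {-l..l}" for x using Dw(5) that um_pos by force
        show "(w has_real_derivative Fc D (w x)) (at x)" if x: "x \<in> {-l<..<l}" for x
        proof -
          have "w x \<in> {um..up}" using Dw(5) x by auto
          then have "w x > 0" using um_pos by auto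
          then show ?thesis using Dw(6) x HFc by metis
        qed
      qed (use Dw in auto)
    next
      case 2
      show ?thesis
      proof (rule that[of "\<lambda>_. um" "g0 um"])
        show "((\<lambda>_. um) has_real_derivative Fc (g0 um) um) (at x)" for x
        proof -
          have "Fc (g0 um) um = 0" unfolding Fc_def g0_def using um_pos by (simp add: field_simps power2_eq_square)
          then show ?thesis by simp
        qed
      qed (use um_pos 2 in auto)
    next
      case 3
      have m: "-um < -up" using 3 by simp
      have sub: "{up..um} \<subseteq> {0<..}" using up_pos by auto
      have neg: "s \<in> {-um..-up} \<Longrightarrow> -s \<in> {up..um}" for s by auto
      obtain K where K: "\<forall>s\<in>{up..um}. \<forall>t\<in>{up..um}. \<bar>g0 s - g0 t\<bar> \<le> K * \<bar>s - t\<bar>" using g0lip[OF up_pos] by blast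
      have K': "\<bar>- g0 (- s) - - g0 (- t)\<bar> \<le> K * \<bar>s - t\<bar>" if "s \<in> {-um..-up}" "t \<in> {-um..-up}" for s t
        using K[rule_format, OF neg[OF that(1)] neg[OF that(2)]] by (simp add: abs_minus_commute)
      have ch0: "continuous_on {up..um} H" unfolding H_def[abs_def]
        by (intro continuous_intros continuous_on_subset[OF cnu sub]) (use sub nz in auto)
      have cg0: "continuous_on {up..um} g0" unfolding g0_def[abs_def]
        by (intro continuous_intros continuous_on_subset[OF cP sub]) (use sub in auto)
      have ch: "continuous_on {-um..-up} (\<lambda>s. H (- s))"
        by (rule continuous_on_compose2[OF ch0]) (auto intro: continuous_intros)
      have cg: "continuous_on {-um..-up} (\<lambda>s. - g0 (- s))"
        by (intro continuous_intros continuous_on_compose2[OF cg0]) (auto intro: continuous_intros)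
      have hp: "\<And>s. s \<in> {-um..-up} \<Longrightarrow> H (- s) > 0" unfolding H_def using up_pos eps_pos vm_pos nu_pos by auto
      have gab: "- g0 (- (-um)) = - g0 (- (-up))" using gRH by simp
      obtain D w where Dw: "\<forall>s\<in>{-um..-up}. - g0 (- s) < D" "continuous_on {-l..l} w" "w (-l) = -um" "w l = -up"
        "\<forall>x\<in>{-l..l}. w x \<in> {-um..-up}"
        "\<forall>x\<in>{-l<..<l}. (w has_real_derivative H (- w x) * (D - - g0 (- w x))) (at x)"
        using exist_gen[OF m l_pos ch hp cg K' gab] by blast
      show ?thesis
      proof (rule that[of "\<lambda>x. - w x" "- D"])
        show "continuous_on {-l..l} (\<lambda>x. - w x)" using Dw(2) by (intro continuous_intros)
        show "- w x > 0" if "x \<in> {-l..l}" for x using Dw(5) that up_pos by force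
        show "((\<lambda>x. - w x) has_real_derivative Fc (- D) (- w x)) (at x)" if x: "x \<in> {-l<..<l}" for x
        proof -
          have "w x \<in> {-um..-up}" using Dw(5) x by auto
          then have p: "- w x > 0" using up_pos by auto
          have "((\<lambda>x. - w x) has_real_derivative - (H (- w x) * (D - - g0 (- w x)))) (at x)"
            using DERIV_minus[OF Dw(6)[rule_format, OF x]] .
          moreover have "- (H (- w x) * (D - - g0 (- w x))) = Fc (- D) (- w x)"
            using HFc[OF p, of "- D"] by (simp add: algebra_simps)
          ultimately show ?thesis by simp
        qed
      qed (use Dw in auto)
    qed
  qed
  have ubS: "stationary_solution P \<nu> \<epsilon> l um up vm ub (\<lambda>_. vm)"
    apply (rule ode_sol[where C = C0, OF l_pos eps_pos vm_pos])
    apply (erule nu_pos)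
    apply (rule ub(1))
    apply (erule ub(2))
    apply (erule ub(3)[unfolded Fc_def])
    apply (rule ub(4))
    by (rule ub(5))
  show ?thesis
  proof (intro exI conjI allI impI ballI)
    show "stationary_solution P \<nu> \<epsilon> l um up vm ub (\<lambda>_. vm)" by (rule ubS)
    fix u v x assume S: "stationary_solution P \<nu> \<epsilon> l um up vm u v" and x: "x \<in> {-l..l}"
    from sol_ode[OF l_pos eps_pos vm_pos nu_pos S] obtain C1 where
      vv: "\<forall>x\<in>{-l..l}. v x = vm" and
      du: "\<forall>x\<in>{-l<..<l}. (u has_real_derivative Fc C1 (u x)) (at x)"
      unfolding Fc_def by blast
    show "v x = vm" using vv x by blast
    have cu: "continuous_on {-l..l} u" and upos: "\<And>x. x \<in> {-l..l} \<Longrightarrow> u x > 0"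
      and ue: "u (-l) = um" "u l = up"
      using S unfolding stationary_solution_def by auto
    have C10: "C1 = C0"
    proof (rule ccontr)
      assume "C1 \<noteq> C0"
      then consider "C1 < C0" | "C0 < C1" by linarith
      then show False
      proof cases
        case 1
        show False
          apply (rule compare_false[OF l_pos ub(1) cu ub(2) upos cFc cFc Fc_mono[OF _ 1] ub(3)])
          using du ub(4,5) ue by auto
      next
        case 2
        show False
          apply (rule compare_false[OF l_pos cu ub(1) upos ub(2) cFc cFc Fc_mono[OF _ 2]])
          using du ub(3-5) ue by auto
      qed
    qed
    have ne: "{-l..l} \<noteq> {}" using l_pos by simp
    obtain xa where xa: "xa \<in> {-l..l}" "\<And>y. y \<in> {-l..l} \<Longrightarrow> u xa \<le> u y"
      using continuous_attains_inf[OF compact_Icc ne cu] by blast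
    obtain xb where xb: "xb \<in> {-l..l}" "\<And>y. y \<in> {-l..l} \<Longrightarrow> u y \<le> u xb"
      using continuous_attains_sup[OF compact_Icc ne cu] by blast
    obtain xc where xc: "xc \<in> {-l..l}" "\<And>y. y \<in> {-l..l} \<Longrightarrow> ub xc \<le> ub y"
      using continuous_attains_inf[OF compact_Icc ne ub(1)] by blast
    obtain xd where xd: "xd \<in> {-l..l}" "\<And>y. y \<in> {-l..l} \<Longrightarrow> ub y \<le> ub xd"
      using continuous_attains_sup[OF compact_Icc ne ub(1)] by blast
    define m where "m = min (u xa) (ub xc)"
    define M where "M = max (u xb) (ub xd)"
    have m0: "m > 0" unfolding m_def using upos[OF xa(1)] ub(2)[OF xc(1)] by simp
    obtain L where L: "\<forall>s\<in>{m..M}. \<forall>t\<in>{m..M}. \<bar>Fc C0 s - Fc C0 t\<bar> \<le> L * \<bar>s - t\<bar>"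
      using Fclip[OF m0] by blast
    have "\<forall>x\<in>{-l..l}. u x = ub x"
    proof (rule uniq_lip[OF l_pos cu ub(1)])
      show "u y \<in> {m..M}" if "y \<in> {-l..l}" for y
        using xa(2)[OF that] xb(2)[OF that] unfolding m_def M_def by auto
      show "ub y \<in> {m..M}" if "y \<in> {-l..l}" for y
        using xc(2)[OF that] xd(2)[OF that] unfolding m_def M_def by auto
      show "\<bar>Fc C0 s - Fc C0 t\<bar> \<le> L * \<bar>s - t\<bar>" if "s \<in> {m..M}" "t \<in> {m..M}" for s t
        using L that by blast
      show "(u has_real_derivative Fc C0 (u y)) (at y)" if "y \<in> {-l<..<l}" for y
        using du that C10 by blast
      show "(ub has_real_derivative Fc C0 (ub y)) (at y)" if "y \<in> {-l<..<l}" for y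
        using ub(3) that by blast
      show "u (-l) = ub (-l)" using ue ub(4) by simp
    qed
    then show "u x = ub x" using x by blast
  qed
qed


end
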